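(* (1) If $T\to A\overset{f}{\to}B\to T[1]$ is a distinguished triangle in $\mathscr{C}$ with $T\in\mathcal{T}$, then $B\in\mathscr{C}^+$ implies $A\in\mathscr{C}^+$. (2) If $V\to A\overset{f}{\to}B\to V[1]$ is a distinguished triangle in $\mathscr{C}$ with $V\in\mathcal{V}$, then $A\in\mathscr{C}^+$ implies $B\in\mathscr{C}^+$.
   Context: $\mathscr{C}$ is a triangulated category with shift $[1]$; subcategories are full, additive, closed under isomorphisms and direct summands. $\mathrm{Ext}^1(X,Y)=\mathscr{C}(X,Y[1])$. $\mathcal{M}\ast\mathcal{N}$ is the full subcategory of objects $C$ admitting a distinguished triangle $M\to C\to N\to M[1]$ with $M\in\mathcal{M}$, $N\in\mathcal{N}$. A cotorsion pair $(\mathcal{U},\mathcal{V})$: $\mathrm{Ext}^1(\mathcal{U},\mathcal{V})=0$ and $\mathscr{C}=\mathcal{U}\ast\mathcal{V}[1]$. Fix a twin cotorsion pair, i.e. cotorsion pairs $(\mathcal{S},\mathcal{T}),(\mathcal{U},\mathcal{V})$ with $\mathrm{Ext}^1(\mathcal{S},\mathcal{V})=0$. Put $\mathcal{W}=\mathcal{T}\cap\mathcal{U}$ and $\mathscr{C}^+=\mathcal{W}\ast\mathcal{V}[1]$. *)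

theory Defs
  imports Main
begin

text \<open>A triangulated category, given concretely: objects of type 'o, morphisms of
type 'm, hom-sets, composition (cmp C g f = g after f), identities, the abelian
group structure on hom-sets, the shift functor [1] on objects and morphisms, and
the class of distinguished triangles (X,Y,Z,f,g,h) meaning X -f-> Y -g-> Z -h-> X[1].\<close>

record ('o,'m) tricat =
  Ob   :: "'o set"
  Hom  :: "'o \<Rightarrow> 'o \<Rightarrow> 'm set"
  cmp  :: "'m \<Rightarrow> 'm \<Rightarrow> 'm"
  idm  :: "'o \<Rightarrow> 'm"
  addm :: "'m \<Rightarrow> 'm \<Rightarrow> 'm"
  zerm :: "'o \<Rightarrow> 'o \<Rightarrow> 'm"
  negm :: "'m \<Rightarrow> 'm"
  sh   :: "'o \<Rightarrow> 'o"
  shm  :: "'m \<Rightarrow> 'm"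
  dtri :: "('o \<times> 'o \<times> 'o \<times> 'm \<times> 'm \<times> 'm) set"

definition is_category :: "('o,'m,'x) tricat_scheme \<Rightarrow> bool" where
  "is_category C \<longleftrightarrow>
     (\<forall>X Y f. f \<in> Hom C X Y \<longrightarrow> X \<in> Ob C \<and> Y \<in> Ob C) \<and>
     (\<forall>X Y X' Y' f. f \<in> Hom C X Y \<and> f \<in> Hom C X' Y' \<longrightarrow> X = X' \<and> Y = Y') \<and>
     (\<forall>X Y Z f g. f \<in> Hom C X Y \<and> g \<in> Hom C Y Z \<longrightarrow> cmp C g f \<in> Hom C X Z) \<and>
     (\<forall>W X Y Z f g h. f \<in> Hom C W X \<and> g \<in> Hom C X Y \<and> h \<in> Hom C Y Z \<longrightarrow>
         cmp C h (cmp C g f) = cmp C (cmp C h g) f) \<and>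
     (\<forall>X \<in> Ob C. idm C X \<in> Hom C X X) \<and>
     (\<forall>X Y f. f \<in> Hom C X Y \<longrightarrow> cmp C f (idm C X) = f \<and> cmp C (idm C Y) f = f)"

definition is_preadditive :: "('o,'m,'x) tricat_scheme \<Rightarrow> bool" where
  "is_preadditive C \<longleftrightarrow>
     (\<forall>X \<in> Ob C. \<forall>Y \<in> Ob C.
        zerm C X Y \<in> Hom C X Y \<and>
        (\<forall>f \<in> Hom C X Y. \<forall>g \<in> Hom C X Y. addm C f g \<in> Hom C X Y \<and> addm C f g = addm C g f) \<and>
        (\<forall>f \<in> Hom C X Y. \<forall>g \<in> Hom C X Y. \<forall>h \<in> Hom C X Y.
            addm C (addm C f g) h = addm C f (addm C g h)) \<and>
        (\<forall>f \<in> Hom C X Y. negm C f \<in> Hom C X Y \<and> addm C f (zerm C X Y) = f \<and>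
            addm C f (negm C f) = zerm C X Y)) \<and>
     (\<forall>X Y Z f g h. f \<in> Hom C X Y \<and> g \<in> Hom C Y Z \<and> h \<in> Hom C Y Z \<longrightarrow>
         cmp C (addm C g h) f = addm C (cmp C g f) (cmp C h f)) \<and>
     (\<forall>X Y Z f g h. f \<in> Hom C X Y \<and> g \<in> Hom C X Y \<and> h \<in> Hom C Y Z \<longrightarrow>
         cmp C h (addm C f g) = addm C (cmp C h f) (cmp C h g))"

definition iso :: "('o,'m,'x) tricat_scheme \<Rightarrow> 'o \<Rightarrow> 'o \<Rightarrow> 'm \<Rightarrow> bool" where
  "iso C X Y f \<longleftrightarrow> f \<in> Hom C X Y \<and>
     (\<exists>g \<in> Hom C Y X. cmp C g f = idm C X \<and> cmp C f g = idm C Y)"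

definition isomorphic :: "('o,'m,'x) tricat_scheme \<Rightarrow> 'o \<Rightarrow> 'o \<Rightarrow> bool" where
  "isomorphic C X Y \<longleftrightarrow> (\<exists>f. iso C X Y f)"

definition is_zero_obj :: "('o,'m,'x) tricat_scheme \<Rightarrow> 'o \<Rightarrow> bool" where
  "is_zero_obj C Z \<longleftrightarrow> Z \<in> Ob C \<and>
     (\<forall>X \<in> Ob C. (\<exists>!f. f \<in> Hom C Z X) \<and> (\<exists>!f. f \<in> Hom C X Z))"

definition is_biproduct ::
  "('o,'m,'x) tricat_scheme \<Rightarrow> 'o \<Rightarrow> 'o \<Rightarrow> 'o \<Rightarrow> 'm \<Rightarrow> 'm \<Rightarrow> 'm \<Rightarrow> 'm \<Rightarrow> bool" where
  "is_biproduct C X Y S i1 i2 p1 p2 \<longleftrightarrow>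
     i1 \<in> Hom C X S \<and> i2 \<in> Hom C Y S \<and> p1 \<in> Hom C S X \<and> p2 \<in> Hom C S Y \<and>
     cmp C p1 i1 = idm C X \<and> cmp C p2 i2 = idm C Y \<and>
     cmp C p2 i1 = zerm C X Y \<and> cmp C p1 i2 = zerm C Y X \<and>
     addm C (cmp C i1 p1) (cmp C i2 p2) = idm C S"

definition is_additive :: "('o,'m,'x) tricat_scheme \<Rightarrow> bool" where
  "is_additive C \<longleftrightarrow> is_category C \<and> is_preadditive C \<and>
     (\<exists>Z. is_zero_obj C Z) \<and>
     (\<forall>X \<in> Ob C. \<forall>Y \<in> Ob C. \<exists>S i1 i2 p1 p2. is_biproduct C X Y S i1 i2 p1 p2)"

definition shift_ok :: "('o,'m,'x) tricat_scheme \<Rightarrow> bool" where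
  "shift_ok C \<longleftrightarrow>
     (\<forall>X \<in> Ob C. sh C X \<in> Ob C) \<and>
     (\<forall>X Y f. f \<in> Hom C X Y \<longrightarrow> shm C f \<in> Hom C (sh C X) (sh C Y)) \<and>
     (\<forall>X Y Z f g. f \<in> Hom C X Y \<and> g \<in> Hom C Y Z \<longrightarrow>
         shm C (cmp C g f) = cmp C (shm C g) (shm C f)) \<and>
     (\<forall>X \<in> Ob C. shm C (idm C X) = idm C (sh C X)) \<and>
     (\<forall>X Y f g. f \<in> Hom C X Y \<and> g \<in> Hom C X Y \<longrightarrow> shm C (addm C f g) = addm C (shm C f) (shm C g)) \<and>
     (\<forall>X \<in> Ob C. \<forall>Y \<in> Ob C. bij_betw (shm C) (Hom C X Y) (Hom C (sh C X) (sh C Y))) \<and>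
     (\<forall>Y \<in> Ob C. \<exists>X \<in> Ob C. isomorphic C (sh C X) Y)"

definition is_triangle ::
  "('o,'m,'x) tricat_scheme \<Rightarrow> 'o \<Rightarrow> 'o \<Rightarrow> 'o \<Rightarrow> 'm \<Rightarrow> 'm \<Rightarrow> 'm \<Rightarrow> bool" where
  "is_triangle C X Y Z f g h \<longleftrightarrow>
     f \<in> Hom C X Y \<and> g \<in> Hom C Y Z \<and> h \<in> Hom C Z (sh C X)"

definition tri_morph ::
  "('o,'m,'x) tricat_scheme \<Rightarrow> 'o \<Rightarrow> 'o \<Rightarrow> 'o \<Rightarrow> 'm \<Rightarrow> 'm \<Rightarrow> 'm \<Rightarrow>
     'o \<Rightarrow> 'o \<Rightarrow> 'o \<Rightarrow> 'm \<Rightarrow> 'm \<Rightarrow> 'm \<Rightarrow> 'm \<Rightarrow> 'm \<Rightarrow> 'm \<Rightarrow> bool" where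
  "tri_morph C X Y Z f g h X' Y' Z' f' g' h' a b c \<longleftrightarrow>
     a \<in> Hom C X X' \<and> b \<in> Hom C Y Y' \<and> c \<in> Hom C Z Z' \<and>
     cmp C b f = cmp C f' a \<and> cmp C c g = cmp C g' b \<and>
     cmp C (shm C a) h = cmp C h' c"

definition triangulated :: "('o,'m,'x) tricat_scheme \<Rightarrow> bool" where
  "triangulated C \<longleftrightarrow> is_additive C \<and> shift_ok C \<and>
     \<comment> \<open>distinguished triangles are triangles\<close>
     (\<forall>X Y Z f g h. (X,Y,Z,f,g,h) \<in> dtri C \<longrightarrow> is_triangle C X Y Z f g h) \<and>
     \<comment> \<open>TR1: closed under isomorphism of triangles\<close>
     (\<forall>X Y Z f g h X' Y' Z' f' g' h' a b c.
        (X,Y,Z,f,g,h) \<in> dtri C \<and> is_triangle C X' Y' Z' f' g' h' \<and>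
        tri_morph C X Y Z f g h X' Y' Z' f' g' h' a b c \<and>
        iso C X X' a \<and> iso C Y Y' b \<and> iso C Z Z' c \<longrightarrow> (X',Y',Z',f',g',h') \<in> dtri C) \<and>
     \<comment> \<open>TR1: X -id-> X -> 0 -> X[1] is distinguished\<close>
     (\<forall>X \<in> Ob C. \<forall>Z. is_zero_obj C Z \<longrightarrow>
        (X, X, Z, idm C X, zerm C X Z, zerm C Z (sh C X)) \<in> dtri C) \<and>
     \<comment> \<open>TR1: every morphism extends to a distinguished triangle\<close>
     (\<forall>X Y f. f \<in> Hom C X Y \<longrightarrow> (\<exists>Z g h. (X,Y,Z,f,g,h) \<in> dtri C)) \<and>
     \<comment> \<open>TR2: rotation\<close>
     (\<forall>X Y Z f g h. (X,Y,Z,f,g,h) \<in> dtri C \<longleftrightarrow>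
        is_triangle C X Y Z f g h \<and> (Y, Z, sh C X, g, h, negm C (shm C f)) \<in> dtri C) \<and>
     \<comment> \<open>TR3: completion of morphisms of triangles\<close>
     (\<forall>X Y Z f g h X' Y' Z' f' g' h' a b.
        (X,Y,Z,f,g,h) \<in> dtri C \<and> (X',Y',Z',f',g',h') \<in> dtri C \<and>
        a \<in> Hom C X X' \<and> b \<in> Hom C Y Y' \<and> cmp C b f = cmp C f' a \<longrightarrow>
        (\<exists>c. tri_morph C X Y Z f g h X' Y' Z' f' g' h' a b c)) \<and>
     \<comment> \<open>TR4: octahedral axiom\<close>
     (\<forall>X Y Z f g Z' i i' X' j j' Y' k k'.
        f \<in> Hom C X Y \<and> g \<in> Hom C Y Z \<and>
        (X,Y,Z',f,i,i') \<in> dtri C \<and> (Y,Z,X',g,j,j') \<in> dtri C \<and>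
        (X,Z,Y',cmp C g f,k,k') \<in> dtri C \<longrightarrow>
        (\<exists>u v. (Z',Y',X',u,v, cmp C (shm C i) j') \<in> dtri C \<and>
           cmp C u i = cmp C k g \<and> cmp C k' u = i' \<and>
           cmp C v k = j \<and> cmp C j' v = cmp C (shm C f) k'))"

text \<open>Full additive subcategories closed under isomorphisms and direct summands,
identified with their classes of objects.\<close>
definition subcat :: "('o,'m,'x) tricat_scheme \<Rightarrow> 'o set \<Rightarrow> bool" where
  "subcat C D \<longleftrightarrow> D \<subseteq> Ob C \<and>
     (\<forall>Z. is_zero_obj C Z \<longrightarrow> Z \<in> D) \<and>
     (\<forall>X Y. X \<in> D \<and> isomorphic C X Y \<longrightarrow> Y \<in> D) \<and>
     (\<forall>X Y S i1 i2 p1 p2. is_biproduct C X Y S i1 i2 p1 p2 \<longrightarrow>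
        (X \<in> D \<and> Y \<in> D \<longrightarrow> S \<in> D) \<and> (S \<in> D \<longrightarrow> X \<in> D \<and> Y \<in> D))"

definition ext1_zero :: "('o,'m,'x) tricat_scheme \<Rightarrow> 'o set \<Rightarrow> 'o set \<Rightarrow> bool" where
  "ext1_zero C A B \<longleftrightarrow> (\<forall>X \<in> A. \<forall>Y \<in> B. Hom C X (sh C Y) = {zerm C X (sh C Y)})"

definition shift_sub :: "('o,'m,'x) tricat_scheme \<Rightarrow> 'o set \<Rightarrow> 'o set" where
  "shift_sub C D = {X \<in> Ob C. \<exists>Y \<in> D. isomorphic C X (sh C Y)}"

definition star :: "('o,'m,'x) tricat_scheme \<Rightarrow> 'o set \<Rightarrow> 'o set \<Rightarrow> 'o set" where
  "star C M N = {A \<in> Ob C. \<exists>X Y f g h. X \<in> M \<and> Y \<in> N \<and> (X,A,Y,f,g,h) \<in> dtri C}"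

definition cotorsion_pair :: "('o,'m,'x) tricat_scheme \<Rightarrow> 'o set \<Rightarrow> 'o set \<Rightarrow> bool" where
  "cotorsion_pair C U V \<longleftrightarrow> subcat C U \<and> subcat C V \<and> ext1_zero C U V \<and>
     Ob C = star C U (shift_sub C V)"

definition twin_cotorsion_pair ::
  "('o,'m,'x) tricat_scheme \<Rightarrow> 'o set \<Rightarrow> 'o set \<Rightarrow> 'o set \<Rightarrow> 'o set \<Rightarrow> bool" where
  "twin_cotorsion_pair C S T U V \<longleftrightarrow>
     cotorsion_pair C S T \<and> cotorsion_pair C U V \<and> ext1_zero C S V"

definition Cplus :: "('o,'m,'x) tricat_scheme \<Rightarrow> 'o set \<Rightarrow> 'o set \<Rightarrow> 'o set \<Rightarrow> 'o set" where
  "Cplus C T U V = star C (T \<inter> U) (shift_sub C V)"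

end

theory Submission
  imports Defs
begin

locale tri =
  fixes C :: "('o,'m,'x) tricat_scheme"
  assumes tri: "triangulated C"
begin

lemma cat: "is_category C" and preadd: "is_preadditive C" and shok: "shift_ok C"
  and addv: "is_additive C"
  using tri unfolding triangulated_def is_additive_def by auto

lemma hom_ob: "f \<in> Hom C X Y \<Longrightarrow> X \<in> Ob C \<and> Y \<in> Ob C"
  using cat unfolding is_category_def by meson
lemma comp_hom: "f \<in> Hom C X Y \<Longrightarrow> g \<in> Hom C Y Z \<Longrightarrow> cmp C g f \<in> Hom C X Z"
  using cat unfolding is_category_def by meson
lemma assoc: "f \<in> Hom C W X \<Longrightarrow> g \<in> Hom C X Y \<Longrightarrow> h \<in> Hom C Y Z \<Longrightarrow>
         cmp C h (cmp C g f) = cmp C (cmp C h g) f"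
  using cat unfolding is_category_def by meson
lemma id_hom: "X \<in> Ob C \<Longrightarrow> idm C X \<in> Hom C X X"
  using cat unfolding is_category_def by meson
lemma id_r: "f \<in> Hom C X Y \<Longrightarrow> cmp C f (idm C X) = f"
  using cat unfolding is_category_def by meson
lemma id_l: "f \<in> Hom C X Y \<Longrightarrow> cmp C (idm C Y) f = f"
  using cat unfolding is_category_def by meson

lemma zero_hom: "X \<in> Ob C \<Longrightarrow> Y \<in> Ob C \<Longrightarrow> zerm C X Y \<in> Hom C X Y"
  using preadd unfolding is_preadditive_def by meson
lemma add_hom: "f \<in> Hom C X Y \<Longrightarrow> g \<in> Hom C X Y \<Longrightarrow> addm C f g \<in> Hom C X Y"
  using preadd hom_ob unfolding is_preadditive_def by meson
lemma add_comm: "f \<in> Hom C X Y \<Longrightarrow> g \<in> Hom C X Y \<Longrightarrow> addm C f g = addm C g f"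
  using preadd hom_ob unfolding is_preadditive_def by meson
lemma add_assoc: "f \<in> Hom C X Y \<Longrightarrow> g \<in> Hom C X Y \<Longrightarrow> h \<in> Hom C X Y \<Longrightarrow>
   addm C (addm C f g) h = addm C f (addm C g h)"
  using preadd hom_ob unfolding is_preadditive_def by meson
lemma neg_hom: "f \<in> Hom C X Y \<Longrightarrow> negm C f \<in> Hom C X Y"
  using preadd hom_ob unfolding is_preadditive_def by meson
lemma add_zero: "f \<in> Hom C X Y \<Longrightarrow> addm C f (zerm C X Y) = f"
  using preadd hom_ob unfolding is_preadditive_def by meson
lemma add_neg: "f \<in> Hom C X Y \<Longrightarrow> addm C f (negm C f) = zerm C X Y"
  using preadd hom_ob unfolding is_preadditive_def by meson
lemma distr_r: "f \<in> Hom C X Y \<Longrightarrow> g \<in> Hom C Y Z \<Longrightarrow> h \<in> Hom C Y Z \<Longrightarrow>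
   cmp C (addm C g h) f = addm C (cmp C g f) (cmp C h f)"
  using preadd unfolding is_preadditive_def by meson
lemma distr_l: "f \<in> Hom C X Y \<Longrightarrow> g \<in> Hom C X Y \<Longrightarrow> h \<in> Hom C Y Z \<Longrightarrow>
   cmp C h (addm C f g) = addm C (cmp C h f) (cmp C h g)"
  using preadd unfolding is_preadditive_def by meson

lemma zero_add: "f \<in> Hom C X Y \<Longrightarrow> addm C (zerm C X Y) f = f"
  by (metis add_comm add_zero hom_ob zero_hom)

lemma cancel: assumes a: "a \<in> Hom C X Y" and "addm C a a = a" shows "a = zerm C X Y"
proof -
  have "addm C (addm C a a) (negm C a) = addm C a (addm C a (negm C a))"
    using a neg_hom add_assoc by blast
  then show ?thesis using assms add_neg add_zero by simp
qed

lemma neg_uniq: assumes a: "a \<in> Hom C X Y" and b: "b \<in> Hom C X Y"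
  and e: "addm C a b = zerm C X Y" shows "b = negm C a"
proof -
  have "negm C a = addm C (negm C a) (addm C a b)" using a neg_hom e add_zero by simp
  also have "\<dots> = addm C (addm C (negm C a) a) b" using a b neg_hom add_assoc by metis
  also have "\<dots> = b" using a b neg_hom add_comm add_neg zero_add by metis
  finally show ?thesis by simp
qed

lemma neg_neg: "a \<in> Hom C X Y \<Longrightarrow> negm C (negm C a) = a"
  by (metis add_comm add_neg neg_hom neg_uniq)

lemma neg_zero: "X \<in> Ob C \<Longrightarrow> Y \<in> Ob C \<Longrightarrow> negm C (zerm C X Y) = zerm C X Y"
  by (metis add_zero neg_uniq zero_hom)

lemma neg_inj: "a \<in> Hom C X Y \<Longrightarrow> b \<in> Hom C X Y \<Longrightarrow> negm C a = negm C b \<Longrightarrow> a = b"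
  by (metis neg_neg)

lemma sub_zero: "a \<in> Hom C X Y \<Longrightarrow> b \<in> Hom C X Y \<Longrightarrow> addm C a (negm C b) = zerm C X Y \<Longrightarrow> a = b"
  by (metis neg_hom neg_neg neg_uniq)

lemma comp_zero_l: assumes f: "f \<in> Hom C X Y" and Z: "Z \<in> Ob C"
  shows "cmp C (zerm C Y Z) f = zerm C X Z"
proof -
  have z: "zerm C Y Z \<in> Hom C Y Z" using f Z hom_ob zero_hom by blast
  have "addm C (cmp C (zerm C Y Z) f) (cmp C (zerm C Y Z) f) = cmp C (zerm C Y Z) f"
    using distr_r[OF f z z] add_zero[OF z] by simp
  then show ?thesis using cancel comp_hom f z by blast
qed

lemma comp_zero_r: assumes g: "g \<in> Hom C Y Z" and X: "X \<in> Ob C"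
  shows "cmp C g (zerm C X Y) = zerm C X Z"
proof -
  have z: "zerm C X Y \<in> Hom C X Y" using g X hom_ob zero_hom by blast
  have "addm C (cmp C g (zerm C X Y)) (cmp C g (zerm C X Y)) = cmp C g (zerm C X Y)"
    using distr_l[OF z z g] add_zero[OF z] by simp
  then show ?thesis using cancel comp_hom g z by blast
qed

lemma comp_neg_l: assumes a: "a \<in> Hom C Y Z" and c: "c \<in> Hom C X Y"
  shows "cmp C (negm C a) c = negm C (cmp C a c)"
proof -
  have "addm C (cmp C a c) (cmp C (negm C a) c) = cmp C (addm C a (negm C a)) c"
    using distr_r[OF c a neg_hom[OF a]] by simp
  also have "\<dots> = zerm C X Z" using add_neg[OF a] comp_zero_l c a hom_ob by metis
  finally show ?thesis using neg_uniq comp_hom a c neg_hom by metis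
qed

lemma comp_neg_r: assumes a: "a \<in> Hom C X Y" and c: "c \<in> Hom C Y Z"
  shows "cmp C c (negm C a) = negm C (cmp C c a)"
proof -
  have "addm C (cmp C c a) (cmp C c (negm C a)) = cmp C c (addm C a (negm C a))"
    using distr_l[OF a neg_hom[OF a] c] by simp
  also have "\<dots> = zerm C X Z" using add_neg[OF a] comp_zero_r c a hom_ob by metis
  finally show ?thesis using neg_uniq comp_hom a c neg_hom by metis
qed

lemma sh_ob: "X \<in> Ob C \<Longrightarrow> sh C X \<in> Ob C"
  using shok unfolding shift_ok_def by meson
lemma shm_hom: "f \<in> Hom C X Y \<Longrightarrow> shm C f \<in> Hom C (sh C X) (sh C Y)"
  using shok unfolding shift_ok_def by meson
lemma shm_comp: "f \<in> Hom C X Y \<Longrightarrow> g \<in> Hom C Y Z \<Longrightarrow> shm C (cmp C g f) = cmp C (shm C g) (shm C f)"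
  using shok unfolding shift_ok_def by meson
lemma shm_id: "X \<in> Ob C \<Longrightarrow> shm C (idm C X) = idm C (sh C X)"
  using shok unfolding shift_ok_def by meson
lemma shm_add: "f \<in> Hom C X Y \<Longrightarrow> g \<in> Hom C X Y \<Longrightarrow> shm C (addm C f g) = addm C (shm C f) (shm C g)"
  using shok unfolding shift_ok_def by meson
lemma shm_bij: "X \<in> Ob C \<Longrightarrow> Y \<in> Ob C \<Longrightarrow> bij_betw (shm C) (Hom C X Y) (Hom C (sh C X) (sh C Y))"
  using shok unfolding shift_ok_def by meson
lemma shm_inj: "f \<in> Hom C X Y \<Longrightarrow> g \<in> Hom C X Y \<Longrightarrow> shm C f = shm C g \<Longrightarrow> f = g"
  using shm_bij hom_ob unfolding bij_betw_def inj_on_def by meson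
lemma shm_surj: assumes "X \<in> Ob C" "Y \<in> Ob C" "h \<in> Hom C (sh C X) (sh C Y)"
  shows "\<exists>f \<in> Hom C X Y. shm C f = h"
  using shm_bij[OF assms(1,2)] assms(3) unfolding bij_betw_def by (metis imageE)

lemma shm_zero: assumes "X \<in> Ob C" "Y \<in> Ob C" shows "shm C (zerm C X Y) = zerm C (sh C X) (sh C Y)"
proof -
  have z: "zerm C X Y \<in> Hom C X Y" using assms zero_hom by blast
  have "addm C (shm C (zerm C X Y)) (shm C (zerm C X Y)) = shm C (zerm C X Y)"
    using shm_add[OF z z] add_zero[OF z] by simp
  then show ?thesis using cancel shm_hom z by blast
qed

lemma shm_neg: assumes f: "f \<in> Hom C X Y" shows "shm C (negm C f) = negm C (shm C f)"
proof -
  have "addm C (shm C f) (shm C (negm C f)) = zerm C (sh C X) (sh C Y)"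
    using shm_add[OF f neg_hom[OF f]] add_neg[OF f] shm_zero hom_ob f by metis
  then show ?thesis using neg_uniq shm_hom f neg_hom by metis
qed

lemma TR0: "(X,Y,Z,f,g,h) \<in> dtri C \<Longrightarrow> f \<in> Hom C X Y \<and> g \<in> Hom C Y Z \<and> h \<in> Hom C Z (sh C X)"
proof -
  have "\<forall>X Y Z f g h. (X,Y,Z,f,g,h) \<in> dtri C \<longrightarrow> is_triangle C X Y Z f g h"
    using tri unfolding triangulated_def by (elim conjE) assumption
  then show "(X,Y,Z,f,g,h) \<in> dtri C \<Longrightarrow> ?thesis" unfolding is_triangle_def by blast
qed

lemma TR1z: "X \<in> Ob C \<Longrightarrow> is_zero_obj C Z \<Longrightarrow> (X, X, Z, idm C X, zerm C X Z, zerm C Z (sh C X)) \<in> dtri C"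
proof -
  have "\<forall>X \<in> Ob C. \<forall>Z. is_zero_obj C Z \<longrightarrow>
        (X, X, Z, idm C X, zerm C X Z, zerm C Z (sh C X)) \<in> dtri C"
    using tri unfolding triangulated_def by (elim conjE) assumption
  then show "X \<in> Ob C \<Longrightarrow> is_zero_obj C Z \<Longrightarrow> ?thesis" by blast
qed

lemma TR1e: "f \<in> Hom C X Y \<Longrightarrow> \<exists>Z g h. (X,Y,Z,f,g,h) \<in> dtri C"
proof -
  have "\<forall>X Y f. f \<in> Hom C X Y \<longrightarrow> (\<exists>Z g h. (X,Y,Z,f,g,h) \<in> dtri C)"
    using tri unfolding triangulated_def by (elim conjE) assumption
  then show "f \<in> Hom C X Y \<Longrightarrow> ?thesis" by blast
qed

lemma TR2: "(X,Y,Z,f,g,h) \<in> dtri C \<longleftrightarrow>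
        is_triangle C X Y Z f g h \<and> (Y, Z, sh C X, g, h, negm C (shm C f)) \<in> dtri C"
proof -
  have "\<forall>X Y Z f g h. (X,Y,Z,f,g,h) \<in> dtri C \<longleftrightarrow>
        is_triangle C X Y Z f g h \<and> (Y, Z, sh C X, g, h, negm C (shm C f)) \<in> dtri C"
    using tri unfolding triangulated_def by (elim conjE) assumption
  then show ?thesis by blast
qed

lemma TR3: "(X,Y,Z,f,g,h) \<in> dtri C \<Longrightarrow> (X',Y',Z',f',g',h') \<in> dtri C \<Longrightarrow>
        a \<in> Hom C X X' \<Longrightarrow> b \<in> Hom C Y Y' \<Longrightarrow> cmp C b f = cmp C f' a \<Longrightarrow>
        (\<exists>c. tri_morph C X Y Z f g h X' Y' Z' f' g' h' a b c)"
proof -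
  have "\<forall>X Y Z f g h X' Y' Z' f' g' h' a b.
        (X,Y,Z,f,g,h) \<in> dtri C \<and> (X',Y',Z',f',g',h') \<in> dtri C \<and>
        a \<in> Hom C X X' \<and> b \<in> Hom C Y Y' \<and> cmp C b f = cmp C f' a \<longrightarrow>
        (\<exists>c. tri_morph C X Y Z f g h X' Y' Z' f' g' h' a b c)"
    using tri unfolding triangulated_def by (elim conjE) assumption
  then show "(X,Y,Z,f,g,h) \<in> dtri C \<Longrightarrow> (X',Y',Z',f',g',h') \<in> dtri C \<Longrightarrow>
        a \<in> Hom C X X' \<Longrightarrow> b \<in> Hom C Y Y' \<Longrightarrow> cmp C b f = cmp C f' a \<Longrightarrow> ?thesis" by blast
qed

lemma rot: "(X,Y,Z,f,g,h) \<in> dtri C \<Longrightarrow> (Y, Z, sh C X, g, h, negm C (shm C f)) \<in> dtri C"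
  using TR2 by blast

lemma rot2: "(X,Y,Z,f,g,h) \<in> dtri C \<Longrightarrow> (Z, sh C X, sh C Y, h, negm C (shm C f), negm C (shm C g)) \<in> dtri C"
  using rot by blast

lemma rot3: "(X,Y,Z,f,g,h) \<in> dtri C \<Longrightarrow>
  (sh C X, sh C Y, sh C Z, negm C (shm C f), negm C (shm C g), negm C (shm C h)) \<in> dtri C"
  using rot by blast

lemma zobj: "\<exists>Z. is_zero_obj C Z" using addv unfolding is_additive_def by blast

lemma zobj_ob: "is_zero_obj C Z \<Longrightarrow> Z \<in> Ob C" unfolding is_zero_obj_def by blast

lemma T2: assumes d: "(X,Y,Z,f,g,h) \<in> dtri C" shows "cmp C g f = zerm C X Z"
proof -
  obtain Z0 where z: "is_zero_obj C Z0" using zobj by blast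
  have f: "f \<in> Hom C X Y" and g: "g \<in> Hom C Y Z" using TR0[OF d] by auto
  have X: "X \<in> Ob C" using f hom_ob by blast
  have d0: "(X, X, Z0, idm C X, zerm C X Z0, zerm C Z0 (sh C X)) \<in> dtri C" using TR1z X z by blast
  obtain c where c: "tri_morph C X X Z0 (idm C X) (zerm C X Z0) (zerm C Z0 (sh C X)) X Y Z f g h (idm C X) f c"
    using TR3[OF d0 d id_hom[OF X] f] by blast
  then have "c \<in> Hom C Z0 Z" "cmp C c (zerm C X Z0) = cmp C g f" unfolding tri_morph_def by auto
  then show ?thesis using comp_zero_r X by metis
qed

lemma T3: assumes d: "(X,Y,Z,f,g,h) \<in> dtri C" and u: "u \<in> Hom C W Y"
  and gu: "cmp C g u = zerm C W Z"
  shows "\<exists>v \<in> Hom C W X. cmp C f v = u"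
proof -
  obtain Z0 where z: "is_zero_obj C Z0" using zobj by blast
  have Z0: "Z0 \<in> Ob C" using z zobj_ob by blast
  have f: "f \<in> Hom C X Y" and g: "g \<in> Hom C Y Z" using TR0[OF d] by auto
  have W: "W \<in> Ob C" and X: "X \<in> Ob C" and Y: "Y \<in> Ob C" and Z: "Z \<in> Ob C"
    using u f g hom_ob by auto
  have d0: "(W, Z0, sh C W, zerm C W Z0, zerm C Z0 (sh C W), negm C (shm C (idm C W))) \<in> dtri C"
    using rot[OF TR1z[OF W z]] .
  have d1: "(Y, Z, sh C X, g, h, negm C (shm C f)) \<in> dtri C" using rot[OF d] .
  have b: "zerm C Z0 Z \<in> Hom C Z0 Z" using zero_hom Z0 Z by blast
  have sq: "cmp C (zerm C Z0 Z) (zerm C W Z0) = cmp C g u"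
    using gu comp_zero_l zero_hom W Z0 Z by metis
  obtain c where c: "tri_morph C W Z0 (sh C W) (zerm C W Z0) (zerm C Z0 (sh C W)) (negm C (shm C (idm C W)))
     Y Z (sh C X) g h (negm C (shm C f)) u (zerm C Z0 Z) c"
    using TR3[OF d0 d1 u b sq] by blast
  then have c1: "c \<in> Hom C (sh C W) (sh C X)"
    and c2: "cmp C (shm C u) (negm C (shm C (idm C W))) = cmp C (negm C (shm C f)) c"
    unfolding tri_morph_def by auto
  have su: "shm C u \<in> Hom C (sh C W) (sh C Y)" using shm_hom u by blast
  have sf: "shm C f \<in> Hom C (sh C X) (sh C Y)" using shm_hom f by blast
  have "cmp C (shm C u) (negm C (shm C (idm C W))) = negm C (shm C u)"
    using shm_id[OF W] comp_neg_r id_hom sh_ob W su id_r by metis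
  moreover have "cmp C (negm C (shm C f)) c = negm C (cmp C (shm C f) c)"
    using comp_neg_l sf c1 by blast
  ultimately have e: "shm C u = cmp C (shm C f) c"
    using c2 neg_inj su comp_hom c1 sf by metis
  obtain v where v: "v \<in> Hom C W X" "shm C v = c" using shm_surj W X c1 by blast
  have "shm C u = shm C (cmp C f v)" using e v shm_comp f by metis
  then have "u = cmp C f v" using shm_inj u comp_hom v f by metis
  then show ?thesis using v by blast
qed

lemma zero_id: assumes z: "is_zero_obj C Z" shows "idm C Z = zerm C Z Z"
proof -
  have Z: "Z \<in> Ob C" using z zobj_ob by blast
  have "\<exists>!f. f \<in> Hom C Z Z" using z Z unfolding is_zero_obj_def by blast
  then show ?thesis using id_hom zero_hom Z by metis
qed

lemma zero_of_id: assumes Z: "Z \<in> Ob C" and i: "idm C Z = zerm C Z Z" shows "is_zero_obj C Z"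
  unfolding is_zero_obj_def
proof (intro conjI ballI Z)
  fix X assume X: "X \<in> Ob C"
  have a: "f = zerm C Z X" if "f \<in> Hom C Z X" for f
    using that id_r[OF that] i comp_zero_r Z by metis
  have b: "f = zerm C X Z" if "f \<in> Hom C X Z" for f
    using that id_l[OF that] i comp_zero_l Z by metis
  show "\<exists>!f. f \<in> Hom C Z X" using a zero_hom Z X by metis
  show "\<exists>!f. f \<in> Hom C X Z" using b zero_hom Z X by metis
qed

lemma sh_zero: assumes z: "is_zero_obj C Z" shows "is_zero_obj C (sh C Z)"
proof -
  have Z: "Z \<in> Ob C" using z zobj_ob by blast
  have "idm C (sh C Z) = zerm C (sh C Z) (sh C Z)"
    using shm_id[OF Z] zero_id[OF z] shm_zero Z by metis
  then show ?thesis using zero_of_id sh_ob Z by blast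
qed

lemma Ztri: assumes z: "is_zero_obj C Z0" and W: "W \<in> Ob C"
  shows "(Z0, W, W, zerm C Z0 W, idm C W, zerm C W (sh C Z0)) \<in> dtri C"
proof -
  have Z0: "Z0 \<in> Ob C" using z zobj_ob by blast
  have "negm C (shm C (zerm C Z0 W)) = zerm C (sh C Z0) (sh C W)"
    using shm_zero neg_zero sh_ob Z0 W by metis
  then have "(W, W, sh C Z0, idm C W, zerm C W (sh C Z0), negm C (shm C (zerm C Z0 W))) \<in> dtri C"
    using TR1z[OF W sh_zero[OF z]] by simp
  moreover have "is_triangle C Z0 W W (zerm C Z0 W) (idm C W) (zerm C W (sh C Z0))"
    unfolding is_triangle_def using zero_hom id_hom Z0 W sh_ob by blast
  ultimately show ?thesis using TR2 by blast
qed

lemma T3': assumes d: "(X,Y,Z,f,g,h) \<in> dtri C" and u: "u \<in> Hom C Y W"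
  and uf: "cmp C u f = zerm C X W"
  shows "\<exists>v \<in> Hom C Z W. cmp C v g = u"
proof -
  obtain Z0 where z: "is_zero_obj C Z0" using zobj by blast
  have Z0: "Z0 \<in> Ob C" using z zobj_ob by blast
  have f: "f \<in> Hom C X Y" using TR0[OF d] by auto
  have W: "W \<in> Ob C" and X: "X \<in> Ob C" using u f hom_ob by auto
  have a: "zerm C X Z0 \<in> Hom C X Z0" using zero_hom X Z0 by blast
  have sq: "cmp C u f = cmp C (zerm C Z0 W) (zerm C X Z0)"
    using uf comp_zero_l a W by metis
  obtain c where "tri_morph C X Y Z f g h Z0 W W (zerm C Z0 W) (idm C W) (zerm C W (sh C Z0)) (zerm C X Z0) u c"
    using TR3[OF d Ztri[OF z W] a u sq] by blast
  then have "c \<in> Hom C Z W" "cmp C c g = cmp C (idm C W) u" unfolding tri_morph_def by auto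
  then show ?thesis using id_l u by metis
qed


lemma SPLIT: assumes d: "(Y,B,K,s,p,q) \<in> dtri C" and r: "r \<in> Hom C B Y"
  and rs: "cmp C r s = idm C Y"
  shows "\<exists>i2. is_biproduct C Y K B s i2 r p"
proof -
  have s: "s \<in> Hom C Y B" and p: "p \<in> Hom C B K" and q: "q \<in> Hom C K (sh C Y)" using TR0[OF d] by auto
  have Y: "Y \<in> Ob C" and B: "B \<in> Ob C" and K: "K \<in> Ob C" using s p hom_ob by auto
  have ss: "shm C s \<in> Hom C (sh C Y) (sh C B)" using shm_hom s by blast
  have sr: "shm C r \<in> Hom C (sh C B) (sh C Y)" using shm_hom r by blast
  have ssq: "cmp C (shm C s) q \<in> Hom C K (sh C B)" using comp_hom[OF q ss] .
  have "cmp C (negm C (shm C s)) q = zerm C K (sh C B)" using T2[OF rot2[OF d]] .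
  then have "negm C (cmp C (shm C s) q) = zerm C K (sh C B)" using comp_neg_l[OF ss q] by simp
  then have "negm C (negm C (cmp C (shm C s) q)) = negm C (zerm C K (sh C B))" by simp
  then have sq0: "cmp C (shm C s) q = zerm C K (sh C B)"
    using neg_neg[OF ssq] neg_zero[OF K sh_ob[OF B]] by simp
  have "q = cmp C (shm C (cmp C r s)) q" using rs shm_id[OF Y] id_l[OF q] by simp
  also have "\<dots> = cmp C (cmp C (shm C r) (shm C s)) q" using shm_comp[OF s r] by simp
  also have "\<dots> = cmp C (shm C r) (cmp C (shm C s) q)" using assoc[OF q ss sr] by simp
  also have "\<dots> = zerm C K (sh C Y)" using sq0 comp_zero_r[OF sr K] by simp
  finally have q0: "q = zerm C K (sh C Y)" .
  have srr: "cmp C s r \<in> Hom C B B" using comp_hom r s by blast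
  have nsr: "negm C (cmp C s r) \<in> Hom C B B" using neg_hom srr by blast
  have idB: "idm C B \<in> Hom C B B" using id_hom B by blast
  define e where "e = addm C (idm C B) (negm C (cmp C s r))"
  have e: "e \<in> Hom C B B" unfolding e_def using add_hom nsr idB by blast
  have srs: "cmp C (cmp C s r) s = s" using assoc[OF s r s] rs id_r[OF s] by simp
  have "cmp C e s = addm C (cmp C (idm C B) s) (cmp C (negm C (cmp C s r)) s)"
    unfolding e_def using distr_r[OF s idB nsr] .
  also have "\<dots> = addm C s (negm C s)" using srs comp_neg_l[OF srr s] id_l[OF s] by simp
  also have "\<dots> = zerm C Y B" using add_neg s by blast
  finally have es: "cmp C e s = zerm C Y B" .
  obtain i2 where i2: "i2 \<in> Hom C K B" "cmp C i2 p = e" using T3'[OF d e es] by blast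
  have ps: "cmp C p s = zerm C Y K" using T2[OF d] .
  have "cmp C p e = addm C (cmp C p (idm C B)) (cmp C p (negm C (cmp C s r)))"
    unfolding e_def using distr_l[OF idB nsr p] .
  also have "\<dots> = addm C p (negm C (cmp C (cmp C p s) r))"
    using id_r[OF p] comp_neg_r[OF srr p] assoc[OF r s p] by simp
  also have "\<dots> = p" using ps comp_zero_l[OF r K] neg_zero[OF B K] add_zero[OF p] by simp
  finally have pe: "cmp C p e = p" .
  have pi: "cmp C p i2 \<in> Hom C K K" using comp_hom i2 p by blast
  have idK: "idm C K \<in> Hom C K K" using id_hom K by blast
  define x where "x = addm C (cmp C p i2) (negm C (idm C K))"
  have x: "x \<in> Hom C K K" unfolding x_def using add_hom neg_hom pi idK by blast
  have "cmp C x p = addm C (cmp C (cmp C p i2) p) (cmp C (negm C (idm C K)) p)"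
    unfolding x_def using distr_r[OF p pi neg_hom[OF idK]] .
  also have "\<dots> = addm C (cmp C p e) (negm C p)"
    using assoc[OF p i2(1) p] i2(2) comp_neg_l[OF idK p] id_l[OF p] by simp
  also have "\<dots> = zerm C B K" using pe add_neg p by simp
  finally have xp: "cmp C x p = zerm C B K" .
  obtain y where y: "y \<in> Hom C (sh C Y) K" "cmp C y q = x" using T3'[OF rot[OF d] x xp] by blast
  have "x = zerm C K K" using y q0 comp_zero_r[OF y(1) K] by simp
  then have pi1: "cmp C p i2 = idm C K" using sub_zero[OF pi idK] unfolding x_def by simp
  have ri: "cmp C r i2 \<in> Hom C K Y" using comp_hom i2 r by blast
  have "cmp C (cmp C r i2) p = cmp C r e" using assoc[OF p i2(1) r] i2(2) by simp
  also have "\<dots> = addm C (cmp C r (idm C B)) (cmp C r (negm C (cmp C s r)))"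
    unfolding e_def using distr_l[OF idB nsr r] .
  also have "\<dots> = addm C r (negm C r)"
    using id_r[OF r] comp_neg_r[OF srr r] assoc[OF r s r] rs id_l[OF r] by simp
  also have "\<dots> = zerm C B Y" using add_neg r by blast
  finally have rip: "cmp C (cmp C r i2) p = zerm C B Y" .
  obtain y' where y': "y' \<in> Hom C (sh C Y) Y" "cmp C y' q = cmp C r i2" using T3'[OF rot[OF d] ri rip] by blast
  have ri0: "cmp C r i2 = zerm C K Y" using y' q0 comp_zero_r[OF y'(1) K] by simp
  have "addm C (cmp C s r) (cmp C i2 p) = addm C (cmp C s r) (addm C (idm C B) (negm C (cmp C s r)))"
    using i2 e_def by simp
  also have "\<dots> = addm C (addm C (cmp C s r) (idm C B)) (negm C (cmp C s r))"
    using add_assoc[OF srr idB nsr] by simp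
  also have "\<dots> = addm C (addm C (idm C B) (cmp C s r)) (negm C (cmp C s r))"
    using add_comm[OF srr idB] by simp
  also have "\<dots> = idm C B" using add_assoc[OF idB srr nsr] add_neg[OF srr] add_zero[OF idB] by simp
  finally have sum: "addm C (cmp C s r) (cmp C i2 p) = idm C B" .
  show ?thesis unfolding is_biproduct_def using s i2 r p rs pi1 ps ri0 sum by blast
qed


lemma G: assumes cp: "cotorsion_pair C A B" and Y: "Y \<in> Ob C"
  and h: "\<forall>a \<in> A. Hom C a (sh C Y) = {zerm C a (sh C Y)}"
  shows "Y \<in> B"
proof -
  have sY: "sh C Y \<in> Ob C" using sh_ob Y by blast
  then have "sh C Y \<in> star C A (shift_sub C B)" using cp unfolding cotorsion_pair_def by blast
  then obtain a0 Bz f g hh where a0: "a0 \<in> A" and Bz: "Bz \<in> shift_sub C B"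
    and d: "(a0, sh C Y, Bz, f, g, hh) \<in> dtri C" unfolding star_def by blast
  have f: "f \<in> Hom C a0 (sh C Y)" and g: "g \<in> Hom C (sh C Y) Bz" using TR0[OF d] by auto
  have f0: "f = zerm C a0 (sh C Y)" using h a0 f by blast
  have "cmp C (idm C (sh C Y)) f = zerm C a0 (sh C Y)" using f0 id_l[OF f] by simp
  then obtain r where r: "r \<in> Hom C Bz (sh C Y)" "cmp C r g = idm C (sh C Y)"
    using T3'[OF d id_hom[OF sY]] by blast
  obtain b0 where b0: "b0 \<in> B" and iso: "isomorphic C Bz (sh C b0)"
    using Bz unfolding shift_sub_def by blast
  obtain phi psi where phi: "phi \<in> Hom C Bz (sh C b0)" and psi: "psi \<in> Hom C (sh C b0) Bz"
    and pp: "cmp C psi phi = idm C Bz"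
    using iso unfolding isomorphic_def iso_def by blast
  have Bob: "b0 \<in> Ob C" using b0 cp unfolding cotorsion_pair_def subcat_def by blast
  have s': "cmp C phi g \<in> Hom C (sh C Y) (sh C b0)" using comp_hom g phi by blast
  have r': "cmp C r psi \<in> Hom C (sh C b0) (sh C Y)" using comp_hom r psi by blast
  have "cmp C (cmp C r psi) (cmp C phi g) = cmp C r (cmp C psi (cmp C phi g))"
    using assoc[OF s' psi r(1)] by simp
  also have "\<dots> = cmp C r (cmp C (cmp C psi phi) g)" using assoc[OF g phi psi] by simp
  also have "\<dots> = idm C (sh C Y)" using pp id_l[OF g] r(2) by simp
  finally have rs': "cmp C (cmp C r psi) (cmp C phi g) = idm C (sh C Y)" .
  obtain s where s: "s \<in> Hom C Y b0" "shm C s = cmp C phi g" using shm_surj[OF Y Bob s'] by blast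
  obtain r0 where r0: "r0 \<in> Hom C b0 Y" "shm C r0 = cmp C r psi" using shm_surj[OF Bob Y r'] by blast
  have "shm C (cmp C r0 s) = shm C (idm C Y)" using shm_comp[OF s(1) r0(1)] s(2) r0(2) rs' shm_id[OF Y] by simp
  then have r0s: "cmp C r0 s = idm C Y" using shm_inj[OF comp_hom[OF s(1) r0(1)] id_hom[OF Y]] by simp
  obtain K p q where d2: "(Y, b0, K, s, p, q) \<in> dtri C" using TR1e s by blast
  obtain i2 where "is_biproduct C Y K b0 s i2 r0 p" using SPLIT[OF d2 r0(1) r0s] by blast
  moreover have "subcat C B" using cp unfolding cotorsion_pair_def by blast
  ultimately show ?thesis using b0 unfolding subcat_def by blast
qed

lemma zero_through: assumes Z: "Z \<in> shift_sub C D" and u: "u \<in> Hom C P Z"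
  and h: "\<forall>v \<in> D. Hom C P (sh C v) = {zerm C P (sh C v)}"
  shows "u = zerm C P Z"
proof -
  obtain v where v: "v \<in> D" and iso: "isomorphic C Z (sh C v)"
    using Z unfolding shift_sub_def by blast
  obtain phi psi where phi: "phi \<in> Hom C Z (sh C v)" and psi: "psi \<in> Hom C (sh C v) Z"
    and pp: "cmp C psi phi = idm C Z"
    using iso unfolding isomorphic_def iso_def by blast
  have P: "P \<in> Ob C" using u hom_ob by blast
  have "cmp C phi u = zerm C P (sh C v)" using h v comp_hom[OF u phi] by blast
  then have "cmp C psi (cmp C phi u) = zerm C P Z" using comp_zero_r[OF psi P] by simp
  then show ?thesis using assoc[OF u phi psi] pp id_l[OF u] by simp
qed

lemma KS: assumes d: "(P,Q,R,al,be,ga) \<in> dtri C" and y: "y \<in> Hom C W (sh C Q)"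
  and by0: "cmp C (shm C be) y = zerm C W (sh C R)"
  and hz: "Hom C W (sh C P) = {zerm C W (sh C P)}"
  shows "y = zerm C W (sh C Q)"
proof -
  have al: "al \<in> Hom C P Q" and be: "be \<in> Hom C Q R" using TR0[OF d] by auto
  have W: "W \<in> Ob C" and R: "R \<in> Ob C" using y be hom_ob by auto
  have sb: "shm C be \<in> Hom C (sh C Q) (sh C R)" using shm_hom[OF be] .
  have sa: "shm C al \<in> Hom C (sh C P) (sh C Q)" using shm_hom[OF al] .
  have "cmp C (negm C (shm C be)) y = zerm C W (sh C R)"
    using comp_neg_l[OF sb y] by0 neg_zero[OF W sh_ob[OF R]] by simp
  then obtain w where w: "w \<in> Hom C W (sh C P)" "cmp C (negm C (shm C al)) w = y"
    using T3[OF rot3[OF d] y] by blast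
  have "w = zerm C W (sh C P)" using w hz by blast
  then show ?thesis using w comp_zero_r[OF neg_hom[OF sa] W] by simp
qed

lemma KS2: assumes d: "(P,Q,R,al,be,ga) \<in> dtri C" and x: "x \<in> Hom C W (sh C P)"
  and ax: "cmp C (shm C al) x = zerm C W (sh C Q)"
  and hz: "\<And>w. w \<in> Hom C W R \<Longrightarrow> w = zerm C W R"
  shows "x = zerm C W (sh C P)"
proof -
  have al: "al \<in> Hom C P Q" and ga: "ga \<in> Hom C R (sh C P)" using TR0[OF d] by auto
  have W: "W \<in> Ob C" and Q: "Q \<in> Ob C" using x al hom_ob by auto
  have sa: "shm C al \<in> Hom C (sh C P) (sh C Q)" using shm_hom[OF al] .
  have "cmp C (negm C (shm C al)) x = zerm C W (sh C Q)"
    using comp_neg_l[OF sa x] ax neg_zero[OF W sh_ob[OF Q]] by simp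
  then obtain w where w: "w \<in> Hom C W R" "cmp C ga w = x"
    using T3[OF rot2[OF d] x] by blast
  have "w = zerm C W R" using w hz by blast
  then show ?thesis using w comp_zero_r[OF ga W] by simp
qed


lemma hom_zero_set: "P \<in> Ob C \<Longrightarrow> Q \<in> Ob C \<Longrightarrow> (\<And>x. x \<in> Hom C P Q \<Longrightarrow> x = zerm C P Q) \<Longrightarrow>
   Hom C P Q = {zerm C P Q}"
  using zero_hom by blast

lemma main1: assumes tw: "twin_cotorsion_pair C S T U V"
  and d: "(X, A, B, t, f, g) \<in> dtri C" and XT: "X \<in> T" and BC: "B \<in> Cplus C T U V"
  shows "A \<in> Cplus C T U V"
proof -
  have cST: "cotorsion_pair C S T" and cUV: "cotorsion_pair C U V" and eSV: "ext1_zero C S V"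
    using tw unfolding twin_cotorsion_pair_def by auto
  have eST: "ext1_zero C S T" and eUV: "ext1_zero C U V" and UOb: "U \<subseteq> Ob C" and SOb: "S \<subseteq> Ob C"
    using cST cUV unfolding cotorsion_pair_def subcat_def by auto
  obtain W Vz a b c where W: "W \<in> T \<inter> U" and Vz: "Vz \<in> shift_sub C V"
    and dB: "(W, B, Vz, a, b, c) \<in> dtri C"
    using BC unfolding Cplus_def star_def by blast
  have t: "t \<in> Hom C X A" and f: "f \<in> Hom C A B" using TR0[OF d] by auto
  have b: "b \<in> Hom C B Vz" using TR0[OF dB] by auto
  have A: "A \<in> Ob C" using f hom_ob by blast
  then have "A \<in> star C U (shift_sub C V)" using cUV unfolding cotorsion_pair_def by blast
  then obtain UA VzA p q r where UA: "UA \<in> U" and VzA: "VzA \<in> shift_sub C V"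
    and dA: "(UA, A, VzA, p, q, r) \<in> dtri C" unfolding star_def by blast
  have p: "p \<in> Hom C UA A" using TR0[OF dA] by auto
  have bfp: "cmp C b (cmp C f p) = zerm C UA Vz"
    using zero_through[OF Vz comp_hom[OF comp_hom[OF p f] b]] eUV UA unfolding ext1_zero_def by blast
  have UAob: "UA \<in> Ob C" using UA UOb by blast
  have "UA \<in> T"
  proof (rule G[OF cST UAob], intro ballI hom_zero_set)
    fix s assume sS: "s \<in> S"
    show sob: "s \<in> Ob C" using sS SOb by blast
    show "sh C UA \<in> Ob C" using sh_ob UAob by blast
    fix x assume x: "x \<in> Hom C s (sh C UA)"
    define y where "y = cmp C (shm C p) x"
    have y: "y \<in> Hom C s (sh C A)" unfolding y_def using comp_hom[OF x shm_hom[OF p]] .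
    define z where "z = cmp C (shm C f) y"
    have z: "z \<in> Hom C s (sh C B)" unfolding z_def using comp_hom[OF y shm_hom[OF f]] .
    have "cmp C (shm C b) z = cmp C (shm C (cmp C b (cmp C f p))) x"
      unfolding z_def y_def
      using shm_comp[OF comp_hom[OF p f] b] shm_comp[OF p f]
        assoc[OF x shm_hom[OF p] shm_hom[OF f]] assoc[OF x comp_hom[OF shm_hom[OF p] shm_hom[OF f]] shm_hom[OF b]]
        assoc[OF shm_hom[OF p] shm_hom[OF f] shm_hom[OF b]] by simp
    also have "\<dots> = zerm C s (sh C Vz)"
      using bfp shm_zero[OF UAob] hom_ob[OF b] comp_zero_l[OF x] sh_ob by simp
    finally have "cmp C (shm C b) z = zerm C s (sh C Vz)" .
    moreover have "Hom C s (sh C W) = {zerm C s (sh C W)}" using eST sS W unfolding ext1_zero_def by blast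
    ultimately have z0: "z = zerm C s (sh C B)" using KS[OF dB z] by blast
    have "Hom C s (sh C X) = {zerm C s (sh C X)}" using eST sS XT unfolding ext1_zero_def by blast
    then have y0: "y = zerm C s (sh C A)" using KS[OF d y] z0 unfolding z_def by blast
    have "\<And>w. w \<in> Hom C s VzA \<Longrightarrow> w = zerm C s VzA"
      using zero_through[OF VzA] eSV sS unfolding ext1_zero_def by blast
    then show "x = zerm C s (sh C UA)" using KS2[OF dA x] y0 unfolding y_def by blast
  qed
  then show ?thesis using A UA VzA dA unfolding Cplus_def star_def by blast
qed

lemma main2: assumes tw: "twin_cotorsion_pair C S T U V"
  and d: "(X, A, B, t, f, g) \<in> dtri C" and XV: "X \<in> V" and AC: "A \<in> Cplus C T U V"
  shows "B \<in> Cplus C T U V"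
proof -
  have cST: "cotorsion_pair C S T" and cUV: "cotorsion_pair C U V" and eSV: "ext1_zero C S V"
    using tw unfolding twin_cotorsion_pair_def by auto
  have eST: "ext1_zero C S T" and eUV: "ext1_zero C U V" and UOb: "U \<subseteq> Ob C" and SOb: "S \<subseteq> Ob C"
    using cST cUV unfolding cotorsion_pair_def subcat_def by auto
  obtain W Vz a b c where W: "W \<in> T \<inter> U" and Vz: "Vz \<in> shift_sub C V"
    and dA: "(W, A, Vz, a, b, c) \<in> dtri C"
    using AC unfolding Cplus_def star_def by blast
  have t: "t \<in> Hom C X A" and f: "f \<in> Hom C A B" and g: "g \<in> Hom C B (sh C X)" using TR0[OF d] by auto
  have b: "b \<in> Hom C A Vz" using TR0[OF dA] by auto
  have B: "B \<in> Ob C" using f hom_ob by blast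
  then have "B \<in> star C U (shift_sub C V)" using cUV unfolding cotorsion_pair_def by blast
  then obtain UB VzB p q r where UB: "UB \<in> U" and VzB: "VzB \<in> shift_sub C V"
    and dB: "(UB, B, VzB, p, q, r) \<in> dtri C" unfolding star_def by blast
  have p: "p \<in> Hom C UB B" using TR0[OF dB] by auto
  have "cmp C g p = zerm C UB (sh C X)" using eUV UB XV comp_hom[OF p g] unfolding ext1_zero_def by blast
  then obtain p' where p': "p' \<in> Hom C UB A" "cmp C f p' = p" using T3[OF rot[OF d] p] by blast
  have bp: "cmp C b p' = zerm C UB Vz"
    using zero_through[OF Vz comp_hom[OF p'(1) b]] eUV UB unfolding ext1_zero_def by blast
  have UBob: "UB \<in> Ob C" using UB UOb by blast
  have "UB \<in> T"
  proof (rule G[OF cST UBob], intro ballI hom_zero_set)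
    fix s assume sS: "s \<in> S"
    show sob: "s \<in> Ob C" using sS SOb by blast
    show "sh C UB \<in> Ob C" using sh_ob UBob by blast
    fix x assume x: "x \<in> Hom C s (sh C UB)"
    define y where "y = cmp C (shm C p') x"
    have y: "y \<in> Hom C s (sh C A)" unfolding y_def using comp_hom[OF x shm_hom[OF p'(1)]] .
    have "cmp C (shm C b) y = cmp C (shm C (cmp C b p')) x"
      unfolding y_def using shm_comp[OF p'(1) b] assoc[OF x shm_hom[OF p'(1)] shm_hom[OF b]] by simp
    also have "\<dots> = zerm C s (sh C Vz)"
      using bp shm_zero[OF UBob] hom_ob[OF b] comp_zero_l[OF x] sh_ob by simp
    finally have "cmp C (shm C b) y = zerm C s (sh C Vz)" .
    moreover have "Hom C s (sh C W) = {zerm C s (sh C W)}" using eST sS W unfolding ext1_zero_def by blast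
    ultimately have y0: "y = zerm C s (sh C A)" using KS[OF dA y] by blast
    have "cmp C (shm C p) x = cmp C (shm C f) y"
      unfolding y_def using p'(2) shm_comp[OF p'(1) f] assoc[OF x shm_hom[OF p'(1)] shm_hom[OF f]] by metis
    also have "\<dots> = zerm C s (sh C B)" using y0 comp_zero_r[OF shm_hom[OF f] sob] by simp
    finally have px: "cmp C (shm C p) x = zerm C s (sh C B)" .
    have "\<And>w. w \<in> Hom C s VzB \<Longrightarrow> w = zerm C s VzB"
      using zero_through[OF VzB] eSV sS unfolding ext1_zero_def by blast
    then show "x = zerm C s (sh C UB)" using KS2[OF dB x px] by blast
  qed
  then show ?thesis using B UB VzB dB unfolding Cplus_def star_def by blast
qed

end

theorem lemma2p13:
  fixes C :: "('o,'m) tricat" and S T U V :: "'o set"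
  assumes "triangulated C"
    and "twin_cotorsion_pair C S T U V"
  shows "(\<forall>X A B t f g. (X, A, B, t, f, g) \<in> dtri C \<and> X \<in> T \<and> B \<in> Cplus C T U V
            \<longrightarrow> A \<in> Cplus C T U V)
       \<and> (\<forall>X A B t f g. (X, A, B, t, f, g) \<in> dtri C \<and> X \<in> V \<and> A \<in> Cplus C T U V
            \<longrightarrow> B \<in> Cplus C T U V)"
proof -
  interpret tri C by (rule tri.intro) (rule assms(1))
  show ?thesis using main1[OF assms(2)] main2[OF assms(2)] by blast
qed

end
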